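(* Let $\lambda\in\mathbb{R}$, let $r\ge s\ge1$ and $n\ge1$ be integers, and let $k\ge0$ be an integer. Then \[ \frac{(-1)^k}{k!}\sum_{p=0}^{k}(-1)^p\binom{k}{p}\bigg(\prod_{j=1}^{n}\big[(p+(j-1)(r-s))_s-(n-j)\lambda\big]\bigg)= \begin{cases} S_\lambda^{(r,s)}(n,k), & \text{if } 0\le k\le ns,\\ 0, & \text{if } k>ns. \end{cases} \]
   Context: Notation: $(x)_0=1$, $(x)_m=x(x-1)\cdots(x-m+1)$ for $m\ge1$. Let $D=\frac{d}{dx}$ and let $x$ also denote the operator of multiplication by $x$. The generalized degenerate $(r,s)$-Stirling numbers of the second kind $S_\lambda^{(r,s)}(n,k)$, $0\le k\le ns$, are defined by the operator identity \[ \prod_{k=0}^{n-1}\Big(x^{r}D^{s}-k\lambda\, x^{r-s}\Big)=x^{n(r-s)}\sum_{k=0}^{ns}S_\lambda^{(r,s)}(n,k)\,x^{k}D^{k}, \] where the product of operators is written with the factors $k=0,1,\dots,n-1$ from left to right. *)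

theory Defs
  imports "HOL-Computational_Algebra.Polynomial"
begin

definition falling :: "real \<Rightarrow> nat \<Rightarrow> real" where
  "falling x m = (\<Prod>i<m. (x - of_nat i))"

definition rs_op :: "real \<Rightarrow> nat \<Rightarrow> nat \<Rightarrow> nat \<Rightarrow> real poly \<Rightarrow> real poly" where
  "rs_op lam r s k f = monom 1 r * (pderiv ^^ s) f - smult (of_nat k * lam) (monom 1 (r - s) * f)"

text \<open>Product of operators with factors k = 0,...,n-1 from left to right:
  the rightmost factor (k = n-1) is applied first.\<close>
definition rs_op_prod :: "real \<Rightarrow> nat \<Rightarrow> nat \<Rightarrow> nat \<Rightarrow> real poly \<Rightarrow> real poly" where
  "rs_op_prod lam r s n f = foldr (rs_op lam r s) [0..<n] f"

text \<open>Generalized degenerate (r,s)-Stirling numbers of the second kind, defined by the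
  operator identity (as operators on real polynomials, which determines the coefficients
  uniquely); coefficients with index beyond n*s are set to 0.\<close>
definition stirling_rs :: "real \<Rightarrow> nat \<Rightarrow> nat \<Rightarrow> nat \<Rightarrow> nat \<Rightarrow> real" where
  "stirling_rs lam r s n k = (THE c :: nat \<Rightarrow> real. (\<forall>j > n * s. c j = 0) \<and>
     (\<forall>f. rs_op_prod lam r s n f =
        monom 1 (n * (r - s)) * (\<Sum>j\<le>n * s. smult (c j) (monom 1 j * (pderiv ^^ j) f)))) k"

end

theory Submission
  imports Defs
begin


lemma falling_nat: "falling (real p) j = fact j * real (p choose j)"
  unfolding falling_def
  by (simp add: binomial_gbinomial gbinomial_mult_fact atLeast0LessThan)

lemma alt_choose_choose:
  assumes "j \<le> k"
  shows "(\<Sum>p=0..k. (-1::real)^p * real (k choose p) * real (p choose j)) = (if j = k then (-1)^k else 0)"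
proof -
  have "(\<Sum>p=0..k. (-1::real)^p * real (k choose p) * real (p choose j))
      = (\<Sum>p=j..k. (-1::real)^p * real (k choose p) * real (p choose j))"
  proof (rule sum.mono_neutral_right)
    show "\<forall>i\<in>{0..k} - {j..k}. (-1::real)^i * real (k choose i) * real (i choose j) = 0" by auto
  qed auto
  also have "\<dots> = (\<Sum>p=j..k. (-1::real)^p * real (k choose j) * real ((k - j) choose (p - j)))"
  proof (rule sum.cong)
    fix p assume "p \<in> {j..k}"
    then have "(k choose p) * (p choose j) = (k choose j) * ((k - j) choose (p - j))"
      by (intro choose_mult) auto
    then have "real (k choose p) * real (p choose j) = real (k choose j) * real ((k - j) choose (p - j))"
      by (metis of_nat_mult)
    then show "(-1::real)^p * real (k choose p) * real (p choose j) = (-1::real)^p * real (k choose j) * real ((k - j) choose (p - j))"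
      by (simp add: mult.assoc)
  qed simp
  also have "\<dots> = (\<Sum>i=0..k-j. (-1::real)^(i+j) * real (k choose j) * real ((k - j) choose i))"
  proof -
    have "(\<Sum>p=j..k. (-1::real)^p * real (k choose j) * real ((k - j) choose (p - j)))
        = (\<Sum>i=0..k-j. (-1::real)^(i+j) * real (k choose j) * real ((k - j) choose (i + j - j)))"
      using sum.shift_bounds_cl_nat_ivl[of "\<lambda>p. (-1::real)^p * real (k choose j) * real ((k - j) choose (p - j))" 0 j "k-j"] assms
      by simp
    then show ?thesis by simp
  qed
  also have "\<dots> = (-1)^j * real (k choose j) * (\<Sum>i\<le>k-j. (-1::real)^i * real ((k - j) choose i))"
    by (simp add: sum_distrib_left power_add atLeast0AtMost mult_ac)
  also have "\<dots> = (if j = k then (-1)^k else 0)"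
  proof (cases "j = k")
    case True then show ?thesis by simp
  next
    case False
    then have "k - j > 0" using assms by simp
    from choose_alternating_sum[OF this, where 'a=real] False show ?thesis by (simp del: of_nat_sum)
  qed
  finally show ?thesis .
qed

lemma alt_falling:
  "(\<Sum>p=0..k. (-1::real)^p * real (k choose p) * falling (real p) j) = (if j = k then (-1)^k * fact k else 0)"
proof (cases "j \<le> k")
  case True
  have "(\<Sum>p=0..k. (-1::real)^p * real (k choose p) * falling (real p) j)
     = fact j * (\<Sum>p=0..k. (-1::real)^p * real (k choose p) * real (p choose j))"
    by (simp add: falling_nat sum_distrib_left mult_ac)
  also have "\<dots> = (if j = k then (-1)^k * fact k else 0)"
    using alt_choose_choose[OF True] by simp
  finally show ?thesis .
next
  case False
  then show ?thesis by (auto simp: falling_nat intro!: sum.neutral)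
qed



lemma falling_Suc: "falling x (Suc s) = falling x s * (x - of_nat s)"
  by (simp add: falling_def)

lemma falling_zero: "m < s \<Longrightarrow> falling (real m) s = 0"
  unfolding falling_def by (rule prod_zero) auto

definition ffp :: "nat \<Rightarrow> real poly" where
  "ffp j = (\<Prod>i<j. [:- of_nat i, 1:])"

lemma poly_ffp: "poly (ffp j) x = falling x j"
  by (simp add: ffp_def falling_def poly_prod)

lemma degree_ffp: "degree (ffp j) = j"
  unfolding ffp_def by (subst degree_prod_eq_sum_degree) auto

lemma lead_ffp: "coeff (ffp j) j = 1"
  using lead_coeff_prod[of "\<lambda>i. [:- real i, 1:]" "{..<j}"] degree_ffp[of j]
  unfolding ffp_def by simp

lemma falling_expansion:
  "degree (G :: real poly) \<le> N \<Longrightarrow>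
    \<exists>c. (\<forall>j>N. c j = 0) \<and> (\<forall>x. poly G x = (\<Sum>j\<le>N. c j * falling x j))"
proof (induction N arbitrary: G)
  case 0
  then obtain a where "G = [:a:]" by (metis degree0_coeffs le_zero_eq)
  then show ?case
    by (intro exI[of _ "\<lambda>j. if j = 0 then a else 0"]) (simp add: falling_def)
next
  case (Suc N)
  define a where "a = coeff G (Suc N)"
  define H where "H = G - smult a (ffp (Suc N))"
  have "degree H \<le> Suc N" unfolding H_def using Suc.prems degree_ffp
    by (metis degree_diff_le degree_smult_le le_trans)
  moreover have "coeff H (Suc N) = 0" unfolding H_def a_def by (simp add: lead_ffp)
  ultimately have "\<forall>i>N. coeff H i = 0"
    by (metis Suc_lessI coeff_eq_0 le_less_trans order.refl)
  then have "degree H \<le> N" by (rule degree_le)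
  from Suc.IH[OF this] obtain c where c: "\<forall>j>N. c j = 0" "\<forall>x. poly H x = (\<Sum>j\<le>N. c j * falling x j)"
    by blast
  show ?case
  proof (intro exI[of _ "c(Suc N := a)"] conjI allI impI)
    fix j assume "j > Suc N" then show "(c(Suc N := a)) j = 0" using c by auto
  next
    fix x
    have "G = H + smult a (ffp (Suc N))" unfolding H_def by simp
    then have "poly G x = (\<Sum>j\<le>N. c j * falling x j) + a * falling x (Suc N)"
      using c by (simp add: poly_ffp)
    also have "\<dots> = (\<Sum>j\<le>Suc N. (c(Suc N := a)) j * falling x j)"
      by simp
    finally show "poly G x = (\<Sum>j\<le>Suc N. (c(Suc N := a)) j * falling x j)" .
  qed
qed

lemma pderiv_iter_monom:
  "(pderiv ^^ s) (monom a m) = monom (a * falling (real m) s) (m - s)"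
proof (induction s)
  case 0 then show ?case by (simp add: falling_def)
next
  case (Suc s)
  have "(pderiv ^^ Suc s) (monom a m) = monom (real (m - s) * (a * falling (real m) s)) (m - Suc s)"
    using Suc by (simp add: pderiv_monom)
  also have "real (m - s) * (a * falling (real m) s) = a * falling (real m) (Suc s)"
  proof (cases "s \<le> m")
    case True then show ?thesis by (simp add: falling_Suc of_nat_diff)
  next
    case False then show ?thesis by (simp add: falling_zero)
  qed
  finally show ?case .
qed

lemma rs_op_monom:
  assumes "s \<le> r"
  shows "rs_op lam r s k (monom a m) = monom (a * (falling (real m) s - real k * lam)) (m + (r - s))"
proof (cases "s \<le> m")
  case True
  then have e: "r + (m - s) = m + (r - s)" "r - s + m = m + (r - s)" using assms by simp_all
  have "rs_op lam r s k (monom a m) = monom (a * falling (real m) s) (m + (r - s)) - monom (real k * lam * a) (m + (r - s))"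
    unfolding rs_op_def pderiv_iter_monom by (simp add: mult_monom smult_monom e)
  also have "\<dots> = monom (a * (falling (real m) s - real k * lam)) (m + (r - s))"
    by (simp add: diff_monom algebra_simps)
  finally show ?thesis .
next
  case False
  have "rs_op lam r s k (monom a m) = - monom (real k * lam * a) (m + (r - s))"
    unfolding rs_op_def pderiv_iter_monom using False by (simp add: mult_monom smult_monom falling_zero add.commute)
  also have "\<dots> = monom (a * (falling (real m) s - real k * lam)) (m + (r - s))"
    using False by (simp add: minus_monom falling_zero algebra_simps)
  finally show ?thesis .
qed



definition Fr :: "real \<Rightarrow> nat \<Rightarrow> nat \<Rightarrow> nat \<Rightarrow> real \<Rightarrow> real" where
  "Fr lam r s n x = (\<Prod>j = 1..n. falling (x + real (j - 1) * (real r - real s)) s - real (n - j) * lam)"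

lemma Fr_Suc:
  "Fr lam r s (Suc n) x = (falling x s - real n * lam) * Fr lam r s n (x + (real r - real s))"
proof -
  have "Fr lam r s (Suc n) x = (falling x s - real n * lam) *
     (\<Prod>j = Suc 1..Suc n. falling (x + real (j - 1) * (real r - real s)) s - real (Suc n - j) * lam)"
    unfolding Fr_def by (subst prod.atLeast_Suc_atMost) auto
  also have "(\<Prod>j = Suc 1..Suc n. falling (x + real (j - 1) * (real r - real s)) s - real (Suc n - j) * lam)
      = (\<Prod>j = 1..n. falling (x + real j * (real r - real s)) s - real (n - j) * lam)"
    by (subst prod.shift_bounds_cl_Suc_ivl) simp
  also have "\<dots> = Fr lam r s n (x + (real r - real s))"
    unfolding Fr_def
  proof (rule prod.cong)
    fix j assume "j \<in> {1..n}"
    then have e: "x + real j * (real r - real s) = x + (real r - real s) + real (j - 1) * (real r - real s)"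
      by (simp add: of_nat_diff algebra_simps)
    show "falling (x + real j * (real r - real s)) s - real (n - j) * lam =
       falling (x + (real r - real s) + real (j - 1) * (real r - real s)) s - real (n - j) * lam" by (simp only: e)
  qed simp
  finally show ?thesis .
qed

lemma foldr_monom:
  assumes "s \<le> r"
  shows "foldr (rs_op lam r s) [0..<n] (monom a m) = monom (a * Fr lam r s n (real m)) (m + n * (r - s))"
proof (induction n arbitrary: a m)
  case 0 then show ?case by (simp add: Fr_def)
next
  case (Suc n)
  have "foldr (rs_op lam r s) [0..<Suc n] (monom a m)
      = foldr (rs_op lam r s) [0..<n] (monom (a * (falling (real m) s - real n * lam)) (m + (r - s)))"
    by (simp add: rs_op_monom[OF assms])
  also have "\<dots> = monom (a * Fr lam r s (Suc n) (real m)) (m + Suc n * (r - s))"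
  proof -
    have e: "m + (r - s) + n * (r - s) = m + Suc n * (r - s)" by simp
    have e2: "real (m + (r - s)) = real m + (real r - real s)" using assms by (simp add: of_nat_diff)
    show ?thesis unfolding Suc.IH e e2 Fr_Suc by (simp add: mult_ac)
  qed
  finally show ?case .
qed

lemma pderiv_iter_add: "(pderiv ^^ j) (f + g) = (pderiv ^^ j) f + (pderiv ^^ j) g"
  by (induction j) (simp_all add: pderiv_add)

lemma pderiv_iter_0: "(pderiv ^^ j) 0 = 0"
  by (induction j) simp_all

lemma rs_op_add: "rs_op lam r s k (f + g) = rs_op lam r s k f + rs_op lam r s k g"
  unfolding rs_op_def by (simp add: pderiv_iter_add algebra_simps smult_add_right)

lemma rs_op_0: "rs_op lam r s k 0 = 0"
  unfolding rs_op_def by (simp add: pderiv_iter_0)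

lemma foldr_add: "foldr (rs_op lam r s) xs (f + g) = foldr (rs_op lam r s) xs f + foldr (rs_op lam r s) xs g"
  by (induction xs) (simp_all add: rs_op_add)

lemma foldr_0: "foldr (rs_op lam r s) xs 0 = 0"
  by (induction xs) (simp_all add: rs_op_0)

lemma additive_eq:
  fixes L R :: "real poly \<Rightarrow> real poly"
  assumes "\<And>f g. L (f + g) = L f + L g" "\<And>f g. R (f + g) = R f + R g" "L 0 = 0" "R 0 = 0"
    "\<And>a m. L (monom a m) = R (monom a m)"
  shows "L f = R f"
proof -
  have "L (\<Sum>i\<in>A. monom (h i) i) = R (\<Sum>i\<in>A. monom (h i) i)" if "finite A" for A and h :: "nat \<Rightarrow> real"
    using that by (induction A rule: finite_induct) (simp_all add: assms)
  from this[of "{..degree f}" "coeff f"] show ?thesis by (simp add: poly_as_sum_of_monoms)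
qed

lemma rhs_monom:
  "monom 1 M * (\<Sum>j\<le>N. smult (c j) (monom 1 j * (pderiv ^^ j) (monom a m)))
     = monom (a * (\<Sum>j\<le>N. c j * falling (real m) j)) (m + M)"
proof -
  have "monom 1 j * (pderiv ^^ j) (monom a m) = monom (a * falling (real m) j) m" for j
  proof (cases "j \<le> m")
    case True then show ?thesis by (simp add: pderiv_iter_monom mult_monom)
  next
    case False then show ?thesis by (simp add: pderiv_iter_monom mult_monom falling_zero)
  qed
  then have "(\<Sum>j\<le>N. smult (c j) (monom 1 j * (pderiv ^^ j) (monom a m)))
      = monom (a * (\<Sum>j\<le>N. c j * falling (real m) j)) m"
    by (simp add: smult_monom monom_sum sum_distrib_left mult_ac)
  then show ?thesis by (simp add: mult_monom add.commute)
qed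

lemma alt_sum_unique:
  fixes c :: "nat \<Rightarrow> real"
  assumes c0: "\<forall>j>N. c j = 0" and cF: "\<forall>m::nat. F (real m) = (\<Sum>j\<le>N. c j * falling (real m) j)"
  shows "(-1) ^ k / fact k * (\<Sum>p = 0..k. (-1) ^ p * real (k choose p) * F (real p)) = c k"
proof -
  have "(\<Sum>p = 0..k. (-1) ^ p * real (k choose p) * F (real p))
      = (\<Sum>j\<le>N. c j * (\<Sum>p = 0..k. (-1) ^ p * real (k choose p) * falling (real p) j))"
    using cF by (simp add: sum_distrib_left sum_distrib_right mult_ac sum.swap[of _ "{0..k}"])
  also have "\<dots> = (\<Sum>j\<le>N. c j * (if j = k then (-1)^k * fact k else 0))"
    by (simp add: alt_falling)
  also have "\<dots> = (if k \<le> N then c k * ((-1)^k * fact k) else 0)"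
    by (simp add: if_distrib sum.delta cong: if_cong)
  finally have "(\<Sum>p = 0..k. (-1) ^ p * real (k choose p) * F (real p)) = c k * ((-1)^k * fact k)"
    using c0 by (auto simp: not_le)
  then show ?thesis by (simp add: power_mult_distrib[symmetric] flip: power_add mult.assoc)
qed



theorem theorem3:
  fixes lam :: real and r s n k :: nat
  assumes "1 \<le> s" and "s \<le> r" and "1 \<le> n"
  shows "(-1) ^ k / fact k *
      (\<Sum>p = 0..k. (-1) ^ p * real (k choose p) *
         (\<Prod>j = 1..n. falling (real p + real (j - 1) * (real r - real s)) s
                        - real (n - j) * lam))
    = (if k \<le> n * s then stirling_rs lam r s n k else 0)"
proof -
  define N where "N = n * s"
  define G where "G = (\<Prod>j = 1..n. pcompose (ffp s) [:real (j - 1) * (real r - real s), 1:] - [:real (n - j) * lam:])"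
  have polyG: "poly G x = Fr lam r s n x" for x
    unfolding G_def Fr_def by (simp add: poly_prod poly_pcompose poly_ffp add.commute)
  have "degree G \<le> (\<Sum>j = 1..n. s)"
    unfolding G_def
  proof (rule order.trans[OF degree_prod_sum_le[OF finite_atLeastAtMost]], rule sum_mono)
    fix j assume "j \<in> {1..n}"
    have "degree (pcompose (ffp s) [:real (j - 1) * (real r - real s), 1:]) = s"
      by (simp add: degree_pcompose degree_ffp)
    then show "(degree \<circ> (\<lambda>j. pcompose (ffp s) [:real (j - 1) * (real r - real s), 1:] - [:real (n - j) * lam:])) j \<le> s"
      using degree_diff_le[of "pcompose (ffp s) [:real (j - 1) * (real r - real s), 1:]" s "[:real (n - j) * lam:]"]
      by simp
  qed
  then have "degree G \<le> N" unfolding N_def by (simp add: mult.commute)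
  from falling_expansion[OF this] obtain c0 where
    c0: "\<forall>j>N. c0 j = 0" "\<forall>x. poly G x = (\<Sum>j\<le>N. c0 j * falling x j)" by blast
  have FF: "\<forall>m::nat. Fr lam r s n (real m) = (\<Sum>j\<le>N. c0 j * falling (real m) j)"
    using c0(2) polyG by simp
  let ?P = "\<lambda>c :: nat \<Rightarrow> real. (\<forall>j > n * s. c j = 0) \<and>
     (\<forall>f. rs_op_prod lam r s n f =
        monom 1 (n * (r - s)) * (\<Sum>j\<le>n * s. smult (c j) (monom 1 j * (pderiv ^^ j) f)))"
  have Pc0: "?P c0"
  proof (rule conjI)
    show "\<forall>j > n * s. c0 j = 0" using c0 N_def by simp
    show "\<forall>f. rs_op_prod lam r s n f =
        monom 1 (n * (r - s)) * (\<Sum>j\<le>n * s. smult (c0 j) (monom 1 j * (pderiv ^^ j) f))"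
    proof
    fix f
    show "rs_op_prod lam r s n f =
        monom 1 (n * (r - s)) * (\<Sum>j\<le>n * s. smult (c0 j) (monom 1 j * (pderiv ^^ j) f))"
      unfolding rs_op_prod_def
    proof (rule additive_eq[where L="foldr (rs_op lam r s) [0..<n]" and
        R="\<lambda>f. monom 1 (n * (r - s)) * (\<Sum>j\<le>n * s. smult (c0 j) (monom 1 j * (pderiv ^^ j) f))"])
      fix a m
      show "foldr (rs_op lam r s) [0..<n] (monom a m) =
          monom 1 (n * (r - s)) * (\<Sum>j\<le>n * s. smult (c0 j) (monom 1 j * (pderiv ^^ j) (monom a m)))"
        unfolding foldr_monom[OF assms(2)] rhs_monom using FF N_def by simp
    qed (simp_all add: foldr_add foldr_0 pderiv_iter_add pderiv_iter_0 smult_add_right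
           distrib_left distrib_right sum.distrib)
    qed
  qed
  have E: "(-1) ^ k / fact k * (\<Sum>p = 0..k. (-1) ^ p * real (k choose p) * Fr lam r s n (real p)) = c k"
    if "\<forall>j>N. c j = 0" "\<forall>m::nat. Fr lam r s n (real m) = (\<Sum>j\<le>N. c j * falling (real m) j)" for c k
    using alt_sum_unique[OF that] .
  have uniq: "c = c0" if "?P c" for c
  proof
    fix k
    have "\<forall>m::nat. Fr lam r s n (real m) = (\<Sum>j\<le>N. c j * falling (real m) j)"
    proof
      fix m :: nat
      from that have "rs_op_prod lam r s n (monom 1 m) =
          monom 1 (n * (r - s)) * (\<Sum>j\<le>n * s. smult (c j) (monom 1 j * (pderiv ^^ j) (monom 1 m)))"
        by blast
      then show "Fr lam r s n (real m) = (\<Sum>j\<le>N. c j * falling (real m) j)"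
        unfolding rs_op_prod_def foldr_monom[OF assms(2)] rhs_monom N_def by simp
    qed
    moreover have "\<forall>j>N. c j = 0" using that N_def by simp
    ultimately show "c k = c0 k" using E[of c k] E[of c0 k] c0(1) FF by simp
  qed
  have "(THE c. ?P c) = c0"
    using Pc0 uniq by (rule the_equality)
  then have st: "stirling_rs lam r s n k = c0 k"
    unfolding stirling_rs_def by simp
  have "(-1) ^ k / fact k *
      (\<Sum>p = 0..k. (-1) ^ p * real (k choose p) *
         (\<Prod>j = 1..n. falling (real p + real (j - 1) * (real r - real s)) s
                        - real (n - j) * lam)) = c0 k"
    using E[of c0 k] c0(1) FF unfolding Fr_def by simp
  then show ?thesis using st c0(1) N_def by auto
qed

end
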